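(* Let $\Phi_{\vec p}=\sum_{k,l}p_{kl}U_{kl}\otimes\overline{U}_{kl}$ be an arbitrary Weyl channel. In the reordered product basis $\{|j\oplus k,j\rangle:\ k,j\in\{0,\dots,N-1\}\}$ the superoperator $\Phi_{\vec p}$ is block diagonal, $\Phi_{\vec p}=\bigoplus_{k=0}^{N-1}\Phi^{(k)}_{\vec p}$, where each block $\Phi^{(k)}_{\vec p}=\sum_{k'}\big(\sum_lp_{k'l}\,\omega^{kl}\big)X^{k'}$ is an $N\times N$ circulant matrix. Consequently the spectrum of $\Phi_{\vec p}$ is contained in the regular $N$-gon with vertices $1,\omega,\dots,\omega^{N-1}$ (the convex hull of the $N$-th roots of unity). Moreover the block $\Phi^{(0)}_{\vec p}$ equals $T(\Phi_{\vec p})=\sum_kq_kX^k$ with $q_k=\sum_lp_{kl}$, so the spectrum of $\Phi_{\vec p}$ contains the spectrum of $T(\Phi_{\vec p})$.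
   Context: Let $N\ge2$, $\omega=e^{2\pi i/N}$, $X|j\rangle=|j\oplus1\rangle$ (addition mod $N$), $Z=\mathrm{diag}(1,\omega,\dots,\omega^{N-1})$, Weyl unitaries $U_{kl}=X^kZ^l$. Maps on $N\times N$ matrices are identified with superoperators acting on $|A\rangle\rangle=\sum A_{ij}|i\rangle|j\rangle$ ($\rho\mapsto K\rho K^\dagger$ corresponds to $K\otimes\overline K$). A Weyl channel is $\Phi_{\vec p}=\sum_{k,l}p_{kl}U_{kl}\otimes\overline{U}_{kl}$ with $(p_{kl})$ a probability vector; its hyper-decoherence is the $N\times N$ matrix $T(\Phi)_{ij}=\langle ii|\Phi|jj\rangle=\mathrm{Tr}[|i\rangle\langle i|\,\Phi(|j\rangle\langle j|)]$. *)

theory Defs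
  imports "HOL-Analysis.Analysis" "Jordan_Normal_Form.Matrix" "Jordan_Normal_Form.Char_Poly"
begin

definition omega :: "nat \<Rightarrow> complex" where
  "omega N = cis (2 * pi / real N)"

definition shiftX :: "nat \<Rightarrow> complex mat" where
  "shiftX N = Matrix.mat N N (\<lambda>(i, j). if i = (j + 1) mod N then 1 else 0)"

definition clockZ :: "nat \<Rightarrow> complex mat" where
  "clockZ N = Matrix.mat N N (\<lambda>(i, j). if i = j then omega N ^ i else 0)"

definition weylU :: "nat \<Rightarrow> nat \<Rightarrow> nat \<Rightarrow> complex mat" where
  "weylU N k l = (shiftX N ^\<^sub>m k) * (clockZ N ^\<^sub>m l)"

definition kron :: "complex mat \<Rightarrow> complex mat \<Rightarrow> complex mat" where
  "kron A B = Matrix.mat (dim_row A * dim_row B) (dim_col A * dim_col B)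
     (\<lambda>(r, c). A $$ (r div dim_row B, c div dim_col B) * B $$ (r mod dim_row B, c mod dim_col B))"

definition conj_mat :: "complex mat \<Rightarrow> complex mat" where
  "conj_mat A = map_mat cnj A"

definition msum :: "nat \<Rightarrow> ('i \<Rightarrow> complex mat) \<Rightarrow> 'i set \<Rightarrow> complex mat" where
  "msum n F S = Matrix.mat n n (\<lambda>ij. \<Sum>s\<in>S. F s $$ ij)"

text \<open>Weyl channel superoperator (an N^2 x N^2 matrix, basis |i>|j> at index i*N+j).\<close>
definition weyl_channel :: "nat \<Rightarrow> (nat \<Rightarrow> nat \<Rightarrow> real) \<Rightarrow> complex mat" where
  "weyl_channel N p = msum (N * N)
     (\<lambda>(k, l). complex_of_real (p k l) \<cdot>\<^sub>m kron (weylU N k l) (conj_mat (weylU N k l)))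
     ({0..<N} \<times> {0..<N})"

definition is_prob_vector :: "nat \<Rightarrow> (nat \<Rightarrow> nat \<Rightarrow> real) \<Rightarrow> bool" where
  "is_prob_vector N p \<longleftrightarrow> (\<forall>k<N. \<forall>l<N. p k l \<ge> 0) \<and> (\<Sum>k<N. \<Sum>l<N. p k l) = 1"

definition hyperdec :: "nat \<Rightarrow> complex mat \<Rightarrow> complex mat" where
  "hyperdec N Phi = Matrix.mat N N (\<lambda>(i, j). Phi $$ (i * N + i, j * N + j))"

text \<open>Index of the reordered basis vector |j+k mod N, j> (block k, position j).\<close>
definition ridx :: "nat \<Rightarrow> nat \<Rightarrow> nat \<Rightarrow> nat" where
  "ridx N k j = ((j + k) mod N) * N + j"

definition weyl_block :: "nat \<Rightarrow> (nat \<Rightarrow> nat \<Rightarrow> real) \<Rightarrow> nat \<Rightarrow> complex mat" where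
  "weyl_block N p k = msum N
     (\<lambda>k'. (\<Sum>l<N. complex_of_real (p k' l) * omega N ^ (k * l)) \<cdot>\<^sub>m (shiftX N ^\<^sub>m k'))
     {0..<N}"

definition mspectrum :: "complex mat \<Rightarrow> complex set" where
  "mspectrum A = {e. eigenvalue A e}"

end

theory Submission
  imports Defs "HOL-Library.Real_Mod" "HOL-Number_Theory.Cong"
begin


lemma omega_pow: "omega N ^ m = cis (2 * pi * real m / real N)"
  unfolding omega_def Complex.DeMoivre by (simp add: field_simps)

lemma omega_N: "N > 0 \<Longrightarrow> omega N ^ N = 1"
  unfolding omega_pow by simp

lemma omega_mod: "N > 0 \<Longrightarrow> omega N ^ m = omega N ^ (m mod N)"
proof -
  assume N: "N > 0"
  have "omega N ^ m = omega N ^ (N * (m div N)) * omega N ^ (m mod N)"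
    by (metis power_add mult_div_mod_eq)
  also have "\<dots> = omega N ^ (m mod N)" by (simp add: power_mult omega_N[OF N])
  finally show ?thesis .
qed

lemma omega_ne1: "0 < m \<Longrightarrow> m < N \<Longrightarrow> omega N ^ m \<noteq> 1"
proof
  assume m: "0 < m" "m < N" and e: "omega N ^ m = 1"
  then obtain n :: int where n: "2 * pi * real m / real N = of_int n * (2 * pi)"
    unfolding omega_pow cis_eq_1_iff by blast
  hence "real m = of_int n * real N" using m by (simp add: field_simps)
  hence "int m = n * int N" by (metis of_int_eq_iff of_int_mult of_int_of_nat_eq)
  show False
  proof (cases "n \<le> 0")
    case True
    hence "n * int N \<le> 0" by (simp add: mult_nonpos_nonneg)
    with \<open>int m = n * int N\<close> m show False by linarith
  next
    case False
    hence "n * int N \<ge> int N" using mult_right_mono[of 1 n "int N"] by simp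
    with \<open>int m = n * int N\<close> m show False by linarith
  qed
qed

lemma norm_omega_pow[simp]: "norm (omega N ^ m) = 1"
  unfolding omega_pow by simp

lemma omega_cnj: "cnj (omega N ^ m) * omega N ^ m = 1"
  by (metis complex_norm_square norm_omega_pow mult.commute complex_mult_cnj of_real_1 power_one)

lemma dft_sum: assumes N: "N > 0"
  shows "(\<Sum>b<N. omega N ^ (m * b)) = (if m mod N = 0 then of_nat N else 0)"
proof (cases "m mod N = 0")
  case True
  have "omega N ^ (m * b) = 1" for b
    using omega_mod[OF N, of "m*b"] True by (simp add: mod_mult_left_eq[symmetric])
  thus ?thesis using True by simp
next
  case False
  let ?z = "omega N ^ m"
  have z1: "?z \<noteq> 1" using omega_ne1[of "m mod N" N] False N omega_mod[OF N, of m] by simp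
  have zN: "?z ^ N = 1" by (metis omega_N[OF N] power_mult power_mult_distrib power_one mult.commute)
  have "(\<Sum>b<N. ?z ^ b) = 0"
    using geometric_sum[OF z1, of N] zN by simp
  thus ?thesis using False by (simp add: power_mult)
qed



lemma mult_entry: "A \<in> carrier_mat n m \<Longrightarrow> B \<in> carrier_mat m q \<Longrightarrow> i < n \<Longrightarrow> j < q \<Longrightarrow>
  (A * B) $$ (i,j) = (\<Sum>c<m. A $$ (i,c) * B $$ (c,j))"
  by (auto simp: scalar_prod_def atLeast0LessThan intro!: sum.cong)

lemma shiftX_carrier[simp]: "shiftX N \<in> carrier_mat N N"
  by (simp add: shiftX_def)
lemma clockZ_carrier[simp]: "clockZ N \<in> carrier_mat N N"
  by (simp add: clockZ_def)

lemma sum_delta_nat: "j < (n::nat) \<Longrightarrow> (\<Sum>c<n. if c = j then f c else 0) = f j"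
  by (subst sum.delta) auto

lemma shiftX_pow: "a < N \<Longrightarrow> b < N \<Longrightarrow>
  (shiftX N ^\<^sub>m k) $$ (a,b) = (if a = (b + k) mod N then 1 else 0)"
proof (induction k arbitrary: a b)
  case 0
  then show ?case by (simp add: shiftX_def)
next
  case (Suc k)
  have "(shiftX N ^\<^sub>m Suc k) $$ (a,b) = (\<Sum>c<N. (shiftX N ^\<^sub>m k) $$ (a,c) * shiftX N $$ (c,b))"
    using Suc.prems by (simp add: mult_entry[of _ N N _ N])
  also have "\<dots> = (\<Sum>c<N. if c = (b+1) mod N then (if a = (c + k) mod N then 1 else 0) else 0)"
    using Suc by (intro sum.cong) (auto simp: shiftX_def)
  also have "\<dots> = (if a = ((b+1) mod N + k) mod N then 1 else 0)"
    using Suc.prems by (subst sum_delta_nat) auto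
  also have "((b+1) mod N + k) mod N = (b + Suc k) mod N"
    by (simp add: mod_add_left_eq)
  finally show ?case .
qed

lemma clockZ_pow: "a < N \<Longrightarrow> b < N \<Longrightarrow>
  (clockZ N ^\<^sub>m l) $$ (a,b) = (if a = b then omega N ^ (a * l) else 0)"
proof (induction l arbitrary: a b)
  case 0
  then show ?case by (simp add: clockZ_def)
next
  case (Suc l)
  have "(clockZ N ^\<^sub>m Suc l) $$ (a,b) = (\<Sum>c<N. (clockZ N ^\<^sub>m l) $$ (a,c) * clockZ N $$ (c,b))"
    using Suc.prems by (simp add: mult_entry[of _ N N _ N])
  also have "\<dots> = (\<Sum>c<N. if c = b then (if a = c then omega N ^ (a * l) else 0) * omega N ^ b else 0)"
    using Suc by (intro sum.cong) (auto simp: clockZ_def)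
  also have "\<dots> = (if a = b then omega N ^ (a * Suc l) else 0)"
    using Suc.prems by (subst sum_delta_nat) (auto simp: power_add)
  finally show ?case .
qed

lemma weylU_carrier[simp]: "weylU N k l \<in> carrier_mat N N"
  unfolding weylU_def by (rule mult_carrier_mat[OF pow_carrier_mat[OF shiftX_carrier] pow_carrier_mat[OF clockZ_carrier]])

lemma weylU_dims[simp]: "dim_row (weylU N k l) = N" "dim_col (weylU N k l) = N"
  by (rule carrier_matD[OF weylU_carrier])+

lemma weylU_entry: "a < N \<Longrightarrow> b < N \<Longrightarrow>
  weylU N k l $$ (a,b) = (if a = (b + k) mod N then omega N ^ (b * l) else 0)"
proof -
  assume ab: "a < N" "b < N"
  have "weylU N k l $$ (a,b) = (\<Sum>c<N. (shiftX N ^\<^sub>m k) $$ (a,c) * (clockZ N ^\<^sub>m l) $$ (c,b))"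
    unfolding weylU_def using ab by (simp add: mult_entry[of _ N N _ N])
  also have "\<dots> = (\<Sum>c<N. if c = b then (if a = (c + k) mod N then 1 else 0) * omega N ^ (c * l) else 0)"
    using ab by (intro sum.cong) (auto simp: shiftX_pow clockZ_pow)
  also have "\<dots> = (if a = (b + k) mod N then omega N ^ (b * l) else 0)"
    using ab by (subst sum_delta_nat) auto
  finally show ?thesis .
qed

lemma idx_lt: "a < (N::nat) \<Longrightarrow> b < N \<Longrightarrow> a * N + b < N * N"
proof -
  assume "a < N" "b < N"
  hence "a * N + b < a * N + N" by linarith
  also have "\<dots> = Suc a * N" by simp
  also have "\<dots> \<le> N * N" using \<open>a < N\<close> by (intro mult_le_mono1) simp
  finally show ?thesis .
qed

lemma kron_entry:
  assumes A: "A \<in> carrier_mat N N" and B: "B \<in> carrier_mat N N"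
    and "a < N" "b < N" "a' < N" "b' < N"
  shows "kron A B $$ (a*N+b, a'*N+b') = A $$ (a,a') * B $$ (b,b')"
proof -
  have r: "(a*N+b) div N = a" "(a*N+b) mod N = b" "(a'*N+b') div N = a'" "(a'*N+b') mod N = b'"
    using assms by auto
  have d: "dim_row A = N" "dim_col A = N" "dim_row B = N" "dim_col B = N" using A B by auto
  show ?thesis unfolding kron_def d
    by (subst index_mat(1)) (use idx_lt[OF assms(3,4)] idx_lt[OF assms(5,6)] r in auto)
qed

lemma conj_carrier[simp]: "A \<in> carrier_mat n m \<Longrightarrow> conj_mat A \<in> carrier_mat n m"
  by (simp add: conj_mat_def)

lemma channel_entry:
  assumes "a < N" "b < N" "a' < N" "b' < N"
  shows "weyl_channel N p $$ (a*N+b, a'*N+b') =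
    (\<Sum>k<N. \<Sum>l<N. if a = (a'+k) mod N \<and> b = (b'+k) mod N
       then complex_of_real (p k l) * (omega N ^ (a' * l) * cnj (omega N ^ (b' * l))) else 0)"
proof -
  have e: "(complex_of_real (p k l) \<cdot>\<^sub>m kron (weylU N k l) (conj_mat (weylU N k l))) $$ (a*N+b, a'*N+b')
     = complex_of_real (p k l) * (weylU N k l $$ (a,a') * cnj (weylU N k l $$ (b,b')))" for k l
  proof -
    have "kron (weylU N k l) (conj_mat (weylU N k l)) \<in> carrier_mat (N*N) (N*N)"
      by (simp add: kron_def conj_mat_def)
    hence "(complex_of_real (p k l) \<cdot>\<^sub>m kron (weylU N k l) (conj_mat (weylU N k l))) $$ (a*N+b, a'*N+b')
      = complex_of_real (p k l) * kron (weylU N k l) (conj_mat (weylU N k l)) $$ (a*N+b, a'*N+b')"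
      using idx_lt[OF assms(1,2)] idx_lt[OF assms(3,4)] by (intro index_smult_mat(1)) auto
    also have "\<dots> = complex_of_real (p k l) * (weylU N k l $$ (a,a') * cnj (weylU N k l $$ (b,b')))"
      by (subst kron_entry[OF weylU_carrier conj_carrier[OF weylU_carrier]])
         (use assms in \<open>auto simp: conj_mat_def\<close>)
    finally show ?thesis .
  qed
  have "weyl_channel N p $$ (a*N+b, a'*N+b') =
     (\<Sum>(k,l)\<in>{0..<N}\<times>{0..<N}. complex_of_real (p k l) *
        (weylU N k l $$ (a,a') * cnj (weylU N k l $$ (b,b'))))"
    unfolding weyl_channel_def msum_def
    apply (subst index_mat(1)) 
    using idx_lt[OF assms(1,2)] idx_lt[OF assms(3,4)] apply auto[2]
    apply (rule sum.cong[OF refl])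
    subgoal for s by (cases s) (simp add: e)
    done
  also have "\<dots> = (\<Sum>k<N. \<Sum>l<N. complex_of_real (p k l) *
        (weylU N k l $$ (a,a') * cnj (weylU N k l $$ (b,b'))))"
    by (simp add: sum.cartesian_product atLeast0LessThan)
  also have "\<dots> = (\<Sum>k<N. \<Sum>l<N. if a = (a'+k) mod N \<and> b = (b'+k) mod N
       then complex_of_real (p k l) * (omega N ^ (a' * l) * cnj (omega N ^ (b' * l))) else 0)"
    using assms by (intro sum.cong refl) (auto simp: weylU_entry)
  finally show ?thesis .
qed



lemma mod_cancel_nat: "((x::nat) + z) mod N = (y + z) mod N \<longleftrightarrow> x mod N = y mod N"
  using cong_add_rcancel_nat[of x z y N] unfolding cong_def .

lemma omega_modmul: "N > 0 \<Longrightarrow> omega N ^ ((x mod N) * l) = omega N ^ (x * l)"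
  by (metis omega_mod mod_mult_left_eq)

lemma channel_carrier[simp]: "weyl_channel N p \<in> carrier_mat (N*N) (N*N)"
  by (simp add: weyl_channel_def msum_def)

lemma shiftX_dims[simp]: "dim_row (shiftX N) = N" "dim_col (shiftX N) = N"
  by (simp_all add: shiftX_def)

lemma block_entry:
  assumes "j < N" "j' < N"
  shows "weyl_block N p k $$ (j,j') =
    (\<Sum>k''<N. \<Sum>l<N. if j = (j'+k'') mod N then complex_of_real (p k'' l) * omega N ^ (k*l) else 0)"
proof -
  have "weyl_block N p k $$ (j,j') = (\<Sum>k''\<in>{0..<N}.
     ((\<Sum>l<N. complex_of_real (p k'' l) * omega N ^ (k * l)) \<cdot>\<^sub>m (shiftX N ^\<^sub>m k'')) $$ (j,j'))"
    unfolding weyl_block_def msum_def using assms by simp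
  also have "\<dots> = (\<Sum>k''<N. (\<Sum>l<N. complex_of_real (p k'' l) * omega N ^ (k * l)) *
       (if j = (j' + k'') mod N then 1 else 0))"
    unfolding atLeast0LessThan
    by (intro sum.cong refl) (use assms in \<open>simp add: shiftX_pow\<close>)
  also have "\<dots> = (\<Sum>k''<N. \<Sum>l<N. if j = (j'+k'') mod N then complex_of_real (p k'' l) * omega N ^ (k*l) else 0)"
    by (intro sum.cong refl) (simp add: sum_distrib_right)
  finally show ?thesis .
qed

lemma channel_ridx:
  assumes "k < N" "j < N" "k' < N" "j' < N"
  shows "weyl_channel N p $$ (ridx N k j, ridx N k' j') =
    (if k = k' then weyl_block N p k $$ (j, j') else 0)"
proof -
  have N: "N > 0" using assms by simp
  have "weyl_channel N p $$ (ridx N k j, ridx N k' j') =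
    (\<Sum>k''<N. \<Sum>l<N. if (j+k) mod N = ((j'+k') mod N+k'') mod N \<and> j = (j'+k'') mod N
       then complex_of_real (p k'' l) * (omega N ^ (((j'+k') mod N) * l) * cnj (omega N ^ (j' * l))) else 0)"
    unfolding ridx_def using assms by (intro channel_entry) auto
  also have "\<dots> = (\<Sum>k''<N. \<Sum>l<N. if k = k' then (if j = (j'+k'') mod N then complex_of_real (p k'' l) * omega N ^ (k*l) else 0) else 0)"
  proof (intro sum.cong refl)
    fix k'' l assume "k'' \<in> {..<N}" "l \<in> {..<N}"
    show "(if (j+k) mod N = ((j'+k') mod N+k'') mod N \<and> j = (j'+k'') mod N
       then complex_of_real (p k'' l) * (omega N ^ (((j'+k') mod N) * l) * cnj (omega N ^ (j' * l))) else 0)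
      = (if k = k' then (if j = (j'+k'') mod N then complex_of_real (p k'' l) * omega N ^ (k*l) else 0) else 0)"
    proof (cases "j = (j'+k'') mod N")
      case True
      have e1: "(j+k) mod N = (j'+k''+k) mod N" using True by (simp add: mod_add_left_eq)
      have e2: "((j'+k') mod N+k'') mod N = (j'+k''+k') mod N"
        by (metis mod_add_left_eq add.commute add.left_commute)
      have c: "(j+k) mod N = ((j'+k') mod N+k'') mod N \<longleftrightarrow> k = k'"
        unfolding e1 e2 add.commute[of "j'+k''"] mod_cancel_nat using assms by simp
      have w: "omega N ^ (((j'+k) mod N) * l) * cnj (omega N ^ (j' * l)) = omega N ^ (k*l)"
      proof -
        have "omega N ^ (((j'+k) mod N) * l) = omega N ^ (j'*l) * omega N ^ (k*l)"
          unfolding omega_modmul[OF N] by (simp add: distrib_right power_add)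
        thus ?thesis using omega_cnj[of N "j'*l"] by (simp add: algebra_simps)
      qed
      show ?thesis using True c w by auto
    qed auto
  qed
  also have "\<dots> = (if k = k' then weyl_block N p k $$ (j, j') else 0)"
  proof (cases "k = k'")
    case True
    hence "k' = k" by simp
    thus ?thesis using assms by (simp add: block_entry)
  qed simp
  finally show ?thesis .
qed



lemma sum_ivl_shift: "(\<Sum>c\<in>{x..<x+k}. g c) = (\<Sum>b<k. g (x+b::nat))"
  by (induction k) auto

lemma sum_split: "(\<Sum>c<M*N. f c) = (\<Sum>a<M. \<Sum>b<N. f (a*N+b::nat))"
  by (subst sum.nat_group[symmetric]) (simp add: sum_ivl_shift)

lemma dims_block[simp]: "dim_row (weyl_block N p k) = N" "dim_col (weyl_block N p k) = N"
  by (simp_all add: weyl_block_def msum_def)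

lemma dims_hyperdec[simp]: "dim_row (hyperdec N A) = N" "dim_col (hyperdec N A) = N"
  by (simp_all add: hyperdec_def)

lemma part3: "N > 0 \<Longrightarrow> weyl_block N p 0 = hyperdec N (weyl_channel N p)"
proof (rule eq_matI)
  fix i j assume N: "N > 0" and ij: "i < dim_row (hyperdec N (weyl_channel N p))" "j < dim_col (hyperdec N (weyl_channel N p))"
  hence ij: "i < N" "j < N" by auto
  have r: "ridx N 0 i = i*N+i" "ridx N 0 j = j*N+j" using ij by (auto simp: ridx_def)
  show "weyl_block N p 0 $$ (i, j) = hyperdec N (weyl_channel N p) $$ (i, j)"
    using channel_ridx[of 0 N i 0 j p] ij N unfolding r by (simp add: hyperdec_def)
qed auto

lemma part4: "N > 0 \<Longrightarrow> hyperdec N (weyl_channel N p)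
         = msum N (\<lambda>k. complex_of_real (\<Sum>l<N. p k l) \<cdot>\<^sub>m (shiftX N ^\<^sub>m k)) {0..<N}"
proof (rule eq_matI)
  fix i j assume N: "N > 0" and ij: "i < dim_row (msum N (\<lambda>k. complex_of_real (\<Sum>l<N. p k l) \<cdot>\<^sub>m (shiftX N ^\<^sub>m k)) {0..<N})"
     "j < dim_col (msum N (\<lambda>k. complex_of_real (\<Sum>l<N. p k l) \<cdot>\<^sub>m (shiftX N ^\<^sub>m k)) {0..<N})"
  hence ij: "i < N" "j < N" by (auto simp: msum_def)
  have "hyperdec N (weyl_channel N p) $$ (i,j) = weyl_block N p 0 $$ (i,j)"
    using part3[OF N] by simp
  also have "\<dots> = (\<Sum>k<N. \<Sum>l<N. if i = (j+k) mod N then complex_of_real (p k l) else 0)"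
    using ij by (subst block_entry) (simp_all only: mult_zero_left power_0 mult_1_right)
  also have "\<dots> = (\<Sum>k<N. complex_of_real (\<Sum>l<N. p k l) * (if i = (j+k) mod N then 1 else 0))"
    by (intro sum.cong refl) auto
  also have "\<dots> = msum N (\<lambda>k. complex_of_real (\<Sum>l<N. p k l) \<cdot>\<^sub>m (shiftX N ^\<^sub>m k)) {0..<N} $$ (i,j)"
    unfolding msum_def using ij by (simp add: atLeast0LessThan shiftX_pow)
  finally show "hyperdec N (weyl_channel N p) $$ (i,j) = msum N (\<lambda>k. complex_of_real (\<Sum>l<N. p k l) \<cdot>\<^sub>m (shiftX N ^\<^sub>m k)) {0..<N} $$ (i,j)" .
qed (auto simp: msum_def)



lemma mv_entry: "A \<in> carrier_mat n n \<Longrightarrow> v \<in> carrier_vec n \<Longrightarrow> i < n \<Longrightarrow>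
  (A *\<^sub>v v) $ i = (\<Sum>c<n. A $$ (i,c) * v $ c)"
  by (auto simp: scalar_prod_def atLeast0LessThan intro!: sum.cong)

lemma channel_dims[simp]: "dim_row (weyl_channel N p) = N*N" "dim_col (weyl_channel N p) = N*N"
  by (rule carrier_matD[OF channel_carrier])+

lemma divmod_idx: "(a::nat) < N \<Longrightarrow> b < N \<Longrightarrow> (a*N+b) div N = a \<and> (a*N+b) mod N = b"
  by auto

lemma chan_diag:
  assumes "a < N" "b < N" "a' < N"
  shows "weyl_channel N p $$ (a*N+b, a'*N+a') = (if a = b then hyperdec N (weyl_channel N p) $$ (a,a') else 0)"
proof (cases "a = b")
  case True
  have "hyperdec N (weyl_channel N p) $$ (a,a') = weyl_channel N p $$ (a*N+a, a'*N+a')"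
    unfolding hyperdec_def using assms by (subst index_mat(1)) auto
  thus ?thesis using True by simp
next
  case False
  have "weyl_channel N p $$ (a*N+b, a'*N+a') =
    (\<Sum>k<N. \<Sum>l<N. if a = (a'+k) mod N \<and> b = (a'+k) mod N
       then complex_of_real (p k l) * (omega N ^ (a' * l) * cnj (omega N ^ (a' * l))) else 0)"
    by (rule channel_entry) (use assms in auto)
  also have "\<dots> = 0" using False by (intro sum.neutral ballI) auto
  finally show ?thesis using False by simp
qed

lemma part5:
  assumes N: "N > 0" and ev: "e \<in> mspectrum (hyperdec N (weyl_channel N p))"
  shows "e \<in> mspectrum (weyl_channel N p)"
proof -
  let ?T = "hyperdec N (weyl_channel N p)"
  let ?P = "weyl_channel N p"
  obtain v where v: "v \<in> carrier_vec N" "v \<noteq> 0\<^sub>v N" "?T *\<^sub>v v = e \<cdot>\<^sub>v v"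
    using ev unfolding mspectrum_def eigenvalue_def eigenvector_def by auto
  have Tc: "?T \<in> carrier_mat N N" by (simp add: hyperdec_def)
  obtain i where i: "i < N" "v $ i \<noteq> 0"
    using v(1,2) by (metis carrier_vecD eq_vecI index_zero_vec(1) index_zero_vec(2))
  define V where "V = vec (N*N) (\<lambda>r. if r div N = r mod N then v $ (r div N) else 0)"
  have Vc: "V \<in> carrier_vec (N*N)" by (simp add: V_def)
  have Vent: "V $ (a*N+b) = (if a = b then v $ a else 0)" if "a < N" "b < N" for a b
    using that idx_lt[OF that] divmod_idx[OF that] by (simp add: V_def)
  have "V $ (i*N+i) \<noteq> 0" using Vent[OF i(1) i(1)] i by simp
  hence V0: "V \<noteq> 0\<^sub>v (N*N)" using idx_lt[OF i(1) i(1)] by auto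
  have "?P *\<^sub>v V = e \<cdot>\<^sub>v V"
  proof (rule eq_vecI)
    show "dim_vec (?P *\<^sub>v V) = dim_vec (e \<cdot>\<^sub>v V)" using Vc by simp
    fix r assume "r < dim_vec (e \<cdot>\<^sub>v V)"
    hence r: "r < N*N" using Vc by simp
    define a where "a = r div N"
    define b where "b = r mod N"
    have ab: "a < N" "b < N" "r = a*N+b" using r N unfolding a_def b_def
      by (auto simp: less_mult_imp_div_less)
    have "(?P *\<^sub>v V) $ r = (\<Sum>c<N*N. ?P $$ (r,c) * V $ c)"
      using r Vc by (intro mv_entry) auto
    also have "\<dots> = (\<Sum>a'<N. \<Sum>b'<N. ?P $$ (r,a'*N+b') * V $ (a'*N+b'))"
      by (rule sum_split)
    also have "\<dots> = (\<Sum>a'<N. ?P $$ (r,a'*N+a') * v $ a')"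
    proof (intro sum.cong refl)
      fix a' assume a': "a' \<in> {..<N}"
      have "(\<Sum>b'<N. ?P $$ (r,a'*N+b') * V $ (a'*N+b')) = (\<Sum>b'<N. if b' = a' then ?P $$ (r,a'*N+b') * v $ a' else 0)"
        using a' by (intro sum.cong refl) (auto simp: Vent)
      also have "\<dots> = ?P $$ (r,a'*N+a') * v $ a'" using a' by (subst sum_delta_nat) auto
      finally show "(\<Sum>b'<N. ?P $$ (r,a'*N+b') * V $ (a'*N+b')) = ?P $$ (r,a'*N+a') * v $ a'" .
    qed
    also have "\<dots> = (\<Sum>a'<N. (if a = b then ?T $$ (a,a') else 0) * v $ a')"
      unfolding ab(3) using ab by (intro sum.cong refl) (simp add: chan_diag)
    also have "\<dots> = (if a = b then (?T *\<^sub>v v) $ a else 0)"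
      using ab by (simp add: mv_entry[OF Tc v(1)] del: index_mult_mat_vec)
    also have "\<dots> = (e \<cdot>\<^sub>v V) $ r"
      using v(1,3) ab Vc Vent[OF ab(1,2)] r by auto
    finally show "(?P *\<^sub>v V) $ r = (e \<cdot>\<^sub>v V) $ r" .
  qed
  thus ?thesis unfolding mspectrum_def eigenvalue_def eigenvector_def using Vc V0 by auto
qed



definition gv :: "nat \<Rightarrow> nat \<Rightarrow> nat \<Rightarrow> nat \<Rightarrow> complex" where
  "gv N a b c = (if c div N = ((c mod N) + a) mod N then omega N ^ ((c mod N) * b) else 0)"

definition mu :: "nat \<Rightarrow> (nat \<Rightarrow> nat \<Rightarrow> real) \<Rightarrow> nat \<Rightarrow> nat \<Rightarrow> complex" where
  "mu N p a b = (\<Sum>k<N. \<Sum>l<N. complex_of_real (p k l) * omega N ^ (k*b + a*l))"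

lemma delta_swap:
  assumes "finite K" "finite L" "\<And>k. k \<in> K \<Longrightarrow> B k < (N::nat)"
  shows "(\<Sum>j<N. \<Sum>k\<in>K. \<Sum>l\<in>L. if j = B k then h k l else (0::complex)) = (\<Sum>k\<in>K. \<Sum>l\<in>L. h k l)"
proof -
  have "(\<Sum>j<N. \<Sum>k\<in>K. \<Sum>l\<in>L. if j = B k then h k l else (0::complex)) =
        (\<Sum>k\<in>K. \<Sum>j<N. \<Sum>l\<in>L. if j = B k then h k l else 0)"
    by (rule sum.swap)
  also have "\<dots> = (\<Sum>k\<in>K. \<Sum>l\<in>L. \<Sum>j<N. if j = B k then h k l else 0)"
    by (intro sum.cong refl sum.swap)
  also have "\<dots> = (\<Sum>k\<in>K. \<Sum>l\<in>L. h k l)"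
    using assms(3) by (intro sum.cong refl) (subst sum_delta_nat, auto)
  finally show ?thesis .
qed

lemma gv_idx: "i < N \<Longrightarrow> j < N \<Longrightarrow> gv N a b (i*N+j) = (if i = (j + a) mod N then omega N ^ (j*b) else 0)"
  using divmod_idx[of i N j] by (simp add: gv_def)

lemma left_eig:
  assumes c: "c < N*N"
  shows "(\<Sum>r<N*N. gv N a b r * weyl_channel N p $$ (r,c)) = mu N p a b * gv N a b c"
proof -
  have N: "N > 0" using c by (cases N) auto
  define i' where "i' = c div N"
  define j' where "j' = c mod N"
  have ij': "i' < N" "j' < N" "c = i'*N+j'" using c N unfolding i'_def j'_def
    by (auto simp: less_mult_imp_div_less)
  define A where "A k = (i'+k) mod N" for k
  define B where "B k = (j'+k) mod N" for k
  have AB: "A k < N" "B k < N" for k using N by (auto simp: A_def B_def)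
  define G where "G k l = gv N a b (A k * N + B k) *
      (complex_of_real (p k l) * (omega N ^ (i' * l) * cnj (omega N ^ (j' * l))))" for k l
  have "(\<Sum>r<N*N. gv N a b r * weyl_channel N p $$ (r,c)) =
     (\<Sum>i<N. \<Sum>j<N. gv N a b (i*N+j) * weyl_channel N p $$ (i*N+j,c))"
    by (rule sum_split)
  also have "\<dots> = (\<Sum>i<N. \<Sum>j<N. \<Sum>k<N. \<Sum>l<N. if j = B k then (if i = A k then G k l else 0) else 0)"
  proof (intro sum.cong refl)
    fix i j assume "i \<in> {..<N}" "j \<in> {..<N}"
    hence ij: "i < N" "j < N" by auto
    have "gv N a b (i*N+j) * weyl_channel N p $$ (i*N+j,c) = gv N a b (i*N+j) *
      (\<Sum>k<N. \<Sum>l<N. if i = (i'+k) mod N \<and> j = (j'+k) mod N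
       then complex_of_real (p k l) * (omega N ^ (i' * l) * cnj (omega N ^ (j' * l))) else 0)"
      unfolding ij'(3) by (subst channel_entry) (use ij ij' in auto)
    also have "\<dots> = (\<Sum>k<N. \<Sum>l<N. if j = B k then (if i = A k then G k l else 0) else 0)"
      unfolding sum_distrib_left by (intro sum.cong refl) (auto simp: A_def B_def G_def)
    finally show "gv N a b (i*N+j) * weyl_channel N p $$ (i*N+j,c) =
        (\<Sum>k<N. \<Sum>l<N. if j = B k then (if i = A k then G k l else 0) else 0)" .
  qed
  also have "\<dots> = (\<Sum>i<N. \<Sum>k<N. \<Sum>l<N. if i = A k then G k l else 0)"
    by (intro sum.cong refl delta_swap) (auto simp: AB)
  also have "\<dots> = (\<Sum>k<N. \<Sum>l<N. G k l)"
    by (intro delta_swap) (auto simp: AB)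
  also have "\<dots> = (\<Sum>k<N. \<Sum>l<N. complex_of_real (p k l) * omega N ^ (k*b + a*l) * gv N a b c)"
  proof (intro sum.cong refl)
    fix k l
    have cond: "A k = (B k + a) mod N \<longleftrightarrow> i' = (j' + a) mod N"
    proof -
      have "(B k + a) mod N = (j' + a + k) mod N" unfolding B_def
        by (metis mod_add_left_eq add.commute add.left_commute)
      hence "A k = (B k + a) mod N \<longleftrightarrow> (i' + k) mod N = (j' + a + k) mod N" by (simp add: A_def)
      also have "\<dots> \<longleftrightarrow> i' mod N = (j' + a) mod N" by (rule mod_cancel_nat)
      also have "\<dots> \<longleftrightarrow> i' = (j' + a) mod N" using ij' by simp
      finally show ?thesis .
    qed
    show "G k l = complex_of_real (p k l) * omega N ^ (k*b + a*l) * gv N a b c"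
    proof (cases "i' = (j' + a) mod N")
      case True
      have g1: "gv N a b (A k * N + B k) = omega N ^ (j'*b) * omega N ^ (k*b)"
        using cond True AB gv_idx[of "A k" N "B k" a b]
        by (simp add: B_def omega_modmul[OF N] distrib_right power_add)
      have g2: "omega N ^ (i' * l) = omega N ^ (j'*l) * omega N ^ (a*l)"
        unfolding True omega_modmul[OF N] by (simp add: distrib_right power_add)
      have g3: "gv N a b c = omega N ^ (j'*b)"
        unfolding ij'(3) using gv_idx[of i' N j' a b] ij' True by simp
      show ?thesis unfolding G_def g1 g2 g3 power_add
        using omega_cnj[of N "j'*l"] by (simp add: algebra_simps)
    next
      case False
      have "gv N a b (A k * N + B k) = 0"
        using cond False AB gv_idx[of "A k" N "B k" a b] by simp
      moreover have "gv N a b c = 0"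
        unfolding ij'(3) using gv_idx[of i' N j' a b] ij' False by simp
      ultimately show ?thesis by (simp add: G_def)
    qed
  qed
  also have "\<dots> = mu N p a b * gv N a b c"
    unfolding mu_def sum_distrib_right ..
  finally show ?thesis .
qed



lemma mu_hull:
  assumes N: "N > 0" and pv: "is_prob_vector N p"
  shows "mu N p a b \<in> convex hull {omega N ^ m | m. m < N}"
proof -
  let ?S = "{omega N ^ m | m. m < N}"
  have "mu N p a b = (\<Sum>x\<in>{..<N}\<times>{..<N}. p (fst x) (snd x) *\<^sub>R omega N ^ ((fst x * b + a * snd x) mod N))"
    unfolding mu_def sum.cartesian_product
    by (intro sum.cong refl) (simp add: case_prod_unfold scaleR_conv_of_real omega_mod[OF N, symmetric])
  also have "\<dots> \<in> convex hull ?S"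
  proof (rule convex_sum)
    show "finite ({..<N}\<times>{..<N})" by simp
    show "convex (convex hull ?S)" by (rule convex_convex_hull)
    have "(\<Sum>x\<in>{..<N}\<times>{..<N}. p (fst x) (snd x)) = (\<Sum>k<N. \<Sum>l<N. p k l)"
      unfolding sum.cartesian_product by (intro sum.cong refl) (simp add: case_prod_unfold)
    thus "(\<Sum>x\<in>{..<N}\<times>{..<N}. p (fst x) (snd x)) = 1"
      using pv unfolding is_prob_vector_def by simp
    show "\<And>x. x \<in> {..<N}\<times>{..<N} \<Longrightarrow> p (fst x) (snd x) \<ge> 0"
      using pv unfolding is_prob_vector_def by auto
    show "\<And>x. x \<in> {..<N}\<times>{..<N} \<Longrightarrow> omega N ^ ((fst x * b + a * snd x) mod N) \<in> convex hull ?S"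
      using N by (intro hull_inc) auto
  qed
  finally show ?thesis .
qed

lemma mod_zero_iff:
  assumes "j < N" "j' < (N::nat)"
  shows "(j' + N - j) mod N = 0 \<longleftrightarrow> j' = j"
proof (cases "j' < j")
  case True
  hence "j' + N - j < N" "j' + N - j > 0" using assms by auto
  thus ?thesis using True by auto
next
  case False
  hence e: "j' + N - j = (j' - j) + N" using assms by auto
  have "(j' + N - j) mod N = (j' - j) mod N" unfolding e by simp
  also have "\<dots> = j' - j" using assms by simp
  finally show ?thesis using False by auto
qed

lemma part2:
  assumes N: "N > 0" and pv: "is_prob_vector N p" and ev: "e \<in> mspectrum (weyl_channel N p)"
  shows "e \<in> convex hull {omega N ^ m | m. m < N}"
proof (rule ccontr)
  assume ne: "e \<notin> convex hull {omega N ^ m | m. m < N}"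
  let ?P = "weyl_channel N p"
  obtain v where v: "v \<in> carrier_vec (N*N)" "v \<noteq> 0\<^sub>v (N*N)" "?P *\<^sub>v v = e \<cdot>\<^sub>v v"
    using ev unfolding mspectrum_def eigenvalue_def eigenvector_def by auto
  define s where "s a b = (\<Sum>c<N*N. gv N a b c * v $ c)" for a b
  have s0: "s a b = 0" for a b
  proof -
    have "(\<Sum>r<N*N. gv N a b r * (?P *\<^sub>v v) $ r) = e * s a b"
      unfolding v(3) s_def sum_distrib_left using v(1) by (intro sum.cong refl) auto
    moreover have "(\<Sum>r<N*N. gv N a b r * (?P *\<^sub>v v) $ r) = mu N p a b * s a b"
    proof -
      have "(\<Sum>r<N*N. gv N a b r * (?P *\<^sub>v v) $ r) = (\<Sum>r<N*N. \<Sum>c<N*N. gv N a b r * ?P $$ (r,c) * v $ c)"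
        using v(1) by (intro sum.cong refl) (simp add: mv_entry[OF channel_carrier v(1)] sum_distrib_left mult.assoc del: index_mult_mat_vec)
      also have "\<dots> = (\<Sum>c<N*N. \<Sum>r<N*N. gv N a b r * ?P $$ (r,c) * v $ c)"
        by (rule sum.swap)
      also have "\<dots> = (\<Sum>c<N*N. (\<Sum>r<N*N. gv N a b r * ?P $$ (r,c)) * v $ c)"
        by (simp add: sum_distrib_right)
      also have "\<dots> = (\<Sum>c<N*N. mu N p a b * gv N a b c * v $ c)"
        by (intro sum.cong refl) (simp add: left_eig)
      also have "\<dots> = mu N p a b * s a b"
        unfolding s_def sum_distrib_left by (simp add: mult.assoc)
      finally show ?thesis .
    qed
    ultimately have "(e - mu N p a b) * s a b = 0" by (simp add: algebra_simps)
    moreover have "e \<noteq> mu N p a b" using ne mu_hull[OF N pv, of a b] by auto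
    ultimately show ?thesis by simp
  qed
  have vz: "v $ (i*N+j) = 0" if ij: "i < N" "j < N" for i j
  proof -
    define a where "a = (i + N - j) mod N"
    have ja: "(j + a) mod N = i"
    proof -
      have "(j + a) mod N = (j + (i + N - j)) mod N" unfolding a_def by (simp add: mod_add_right_eq)
      also have "j + (i + N - j) = i + N" using ij by simp
      finally show ?thesis using ij by simp
    qed
    define u where "u j' = v $ (((j' + a) mod N) * N + j')" for j'
    have sab: "s a b = (\<Sum>j'<N. omega N ^ (j'*b) * u j')" for b
    proof -
      have "s a b = (\<Sum>i'<N. \<Sum>j'<N. gv N a b (i'*N+j') * v $ (i'*N+j'))"
        unfolding s_def by (rule sum_split)
      also have "\<dots> = (\<Sum>i'<N. \<Sum>j'<N. \<Sum>k\<in>{0::nat}. \<Sum>l\<in>{0::nat}. if i' = (j'+a) mod N then omega N ^ (j'*b) * u j' else 0)"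
        by (intro sum.cong refl) (auto simp: gv_idx u_def)
      also have "\<dots> = (\<Sum>j'<N. \<Sum>i'<N. \<Sum>k\<in>{0::nat}. \<Sum>l\<in>{0::nat}. if i' = (j'+a) mod N then omega N ^ (j'*b) * u j' else 0)"
        by (rule sum.swap)
      also have "\<dots> = (\<Sum>j'<N. \<Sum>k\<in>{0::nat}. \<Sum>l\<in>{0::nat}. omega N ^ (j'*b) * u j')"
        using N by (intro sum.cong refl delta_swap) auto
      finally show ?thesis by simp
    qed
    have "0 = (\<Sum>b<N. omega N ^ ((N - j) * b) * s a b)" by (simp add: s0)
    also have "\<dots> = (\<Sum>b<N. \<Sum>j'<N. omega N ^ ((j' + N - j) * b) * u j')"
      unfolding sab sum_distrib_left
      by (intro sum.cong refl) (use ij in \<open>simp add: power_add[symmetric] mult.assoc algebra_simps\<close>)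
    also have "\<dots> = (\<Sum>j'<N. (\<Sum>b<N. omega N ^ ((j' + N - j) * b)) * u j')"
      by (subst sum.swap) (simp add: sum_distrib_right)
    also have "\<dots> = (\<Sum>j'<N. if j' = j then of_nat N * u j' else 0)"
      using ij by (intro sum.cong refl) (simp add: dft_sum[OF N] mod_zero_iff)
    also have "\<dots> = of_nat N * u j" using ij by (subst sum_delta_nat) auto
    finally have "u j = 0" using N by simp
    thus ?thesis unfolding u_def ja .
  qed
  have "v = 0\<^sub>v (N*N)"
  proof (rule eq_vecI)
    fix r assume "r < dim_vec (0\<^sub>v (N*N) :: complex vec)"
    hence r: "r < N*N" by simp
    have "r = (r div N)*N + r mod N" by simp
    moreover have "r div N < N" "r mod N < N" using r N by (auto simp: less_mult_imp_div_less)
    ultimately show "v $ r = 0\<^sub>v (N*N) $ r" using vz r by (metis index_zero_vec(1))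
  qed (use v(1) in auto)
  with v(2) show False by simp
qed


theorem proposition4:
  fixes N :: nat and p :: "nat \<Rightarrow> nat \<Rightarrow> real"
  assumes "N \<ge> 2" and "is_prob_vector N p"
  shows "(\<forall>k<N. \<forall>j<N. \<forall>k'<N. \<forall>j'<N.
            weyl_channel N p $$ (ridx N k j, ridx N k' j') =
              (if k = k' then weyl_block N p k $$ (j, j') else 0))
     \<and> mspectrum (weyl_channel N p) \<subseteq> convex hull {omega N ^ m | m. m < N}
     \<and> weyl_block N p 0 = hyperdec N (weyl_channel N p)
     \<and> hyperdec N (weyl_channel N p)
         = msum N (\<lambda>k. complex_of_real (\<Sum>l<N. p k l) \<cdot>\<^sub>m (shiftX N ^\<^sub>m k)) {0..<N}
     \<and> mspectrum (hyperdec N (weyl_channel N p)) \<subseteq> mspectrum (weyl_channel N p)"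
proof -
  have N: "N > 0" using assms(1) by simp
  show ?thesis
    using channel_ridx[where p = p] part2[OF N assms(2)] part3[OF N, of p] part4[OF N, of p] part5[OF N, of _ p]
    by blast
qed

end
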